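(* Let $\rho:(0,\infty)\to(0,\infty)$ be continuous with $\int_0^\infty\rho(r)(1\wedge r^2)r^{d-1}dr<\infty$ and $\int_0^1r^{d-1}\rho(r)^{-1}dr<\infty$. Let $\gamma(r):=\inf_{0<s\le r+1}\rho(s)$ for $r>0$, and assume $\gamma(r)>0$ for all $r>0$ and $\int_{\{|x|>1\}}\frac{e^{-2V(x)}}{\gamma(|x|)}dx<\infty$. Suppose there is $\alpha_0\in(0,1)$ with $$\int_1^\infty r^{d+\alpha_0-1}\rho(r)dr<\infty\quad\text{and}\quad\limsup_{|x|\to\infty}\frac{\sup_{|z|\ge|x|}e^{-V(z)}}{\gamma(|x|)|x|^{\alpha_0}}=0.$$ Then there is $C_1>0$ such that for all $f\in C_b^\infty(\mathbb R^d)$, $$\int\big(f(x)-\mu_V(f)\big)^2e^{V(x)}\gamma(|x|)\,\mu_V(dx)\le C_1D_{\rho,V}(f,f).$$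
   Context: Let $d\ge1$. $V:\mathbb R^d\to\mathbb R$ is a locally bounded measurable function such that $e^{-V}$ is bounded and $\int e^{-V(x)}dx<\infty$; $\mu_V(dx)=\frac{e^{-V(x)}}{\int e^{-V(y)}dy}dx$, $\mu_V(f)=\int f\,d\mu_V$. $C_b^\infty$ denotes smooth functions bounded with all derivatives. $D_{\rho,V}(f,f):=\frac12\iint(f(y)-f(x))^2\rho(|x-y|)\,dy\,\mu_V(dx)$. *)

theory Defs
  imports "HOL-Analysis.Analysis"
begin

text \<open>C_b^infinity: smooth functions which are bounded together with all their
  (partial) derivatives.  g bs is the iterated partial derivative of f along the
  basis directions in the list bs (the head of the list is the last derivative taken).\<close>
definition Cb_inf :: "('a::euclidean_space \<Rightarrow> real) set" where
  "Cb_inf = {f. \<exists>g :: 'a list \<Rightarrow> 'a \<Rightarrow> real.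
      g [] = f \<and>
      (\<forall>bs b x. set bs \<subseteq> Basis \<longrightarrow> b \<in> Basis \<longrightarrow>
          ((\<lambda>t. g bs (x + t *\<^sub>R b)) has_real_derivative g (b # bs) x) (at 0)) \<and>
      (\<forall>bs. set bs \<subseteq> Basis \<longrightarrow> continuous_on UNIV (g bs) \<and> bounded (range (g bs)))}"

definition ZV :: "('a::euclidean_space \<Rightarrow> real) \<Rightarrow> real" where
  "ZV V = (\<integral>y. exp (- V y) \<partial>lborel)"

definition muV :: "('a::euclidean_space \<Rightarrow> real) \<Rightarrow> 'a measure" where
  "muV V = density lborel (\<lambda>x. ennreal (exp (- V x) / ZV V))"

definition muV_int :: "('a::euclidean_space \<Rightarrow> real) \<Rightarrow> ('a \<Rightarrow> real) \<Rightarrow> real" where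
  "muV_int V f = (\<integral>x. f x \<partial>muV V)"

definition Dform :: "(real \<Rightarrow> real) \<Rightarrow> ('a::euclidean_space \<Rightarrow> real) \<Rightarrow> ('a \<Rightarrow> real) \<Rightarrow> ennreal" where
  "Dform \<rho> V f = (1/2) * (\<integral>\<^sup>+x. (\<integral>\<^sup>+y. ennreal ((f y - f x)\<^sup>2 * \<rho> (norm (x - y))) \<partial>lborel) \<partial>muV V)"

definition gammaf :: "(real \<Rightarrow> real) \<Rightarrow> real \<Rightarrow> real" where
  "gammaf \<rho> r = Inf {\<rho> s | s. 0 < s \<and> s \<le> r + 1}"

end

theory Submission
  imports Defs
begin


lemma gam_nonneg:
  assumes rho_pos: "\<And>r. 0 < r \<Longrightarrow> 0 < \<rho> r" and r: "r > -1"
  shows "0 \<le> gammaf \<rho> r"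
  unfolding gammaf_def
proof (rule cInf_greatest)
  show "{\<rho> s |s. 0 < s \<and> s \<le> r + 1} \<noteq> {}" using r by (auto intro!: exI[of _ "r+1"])
qed (auto dest: rho_pos intro: less_imp_le)

lemma gam_le:
  assumes rho_pos: "\<And>r. 0 < r \<Longrightarrow> 0 < \<rho> r" and "0 < s" "s \<le> r + 1"
  shows "gammaf \<rho> r \<le> \<rho> s"
  unfolding gammaf_def
  apply (rule cInf_lower)
  using assms apply blast
  unfolding bdd_below_def using rho_pos by (auto intro!: exI[of _ 0] less_imp_le)

lemma gam_mono:
  assumes rho_pos: "\<And>r. 0 < r \<Longrightarrow> 0 < \<rho> r" and "-1 < r" "r \<le> r'"
  shows "gammaf \<rho> r' \<le> gammaf \<rho> r"
  unfolding gammaf_def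
  apply (rule cInf_superset_mono)
  using assms apply (auto intro!: exI[of _ "r+1"])[1]
  unfolding bdd_below_def using rho_pos apply (auto intro!: exI[of _ 0] less_imp_le)[1]
  using assms by auto

lemma gam_meas:
  assumes rho_pos: "\<And>r. 0 < r \<Longrightarrow> 0 < \<rho> r"
  shows "(\<lambda>x::'a::euclidean_space. gammaf \<rho> (norm x)) \<in> borel_measurable borel"
proof -
  have m: "mono (\<lambda>r. - gammaf \<rho> (max 0 r))"
    by (rule monoI) (auto intro!: gam_mono[OF rho_pos])
  have "(\<lambda>r. - (- gammaf \<rho> (max 0 r))) \<in> borel_measurable borel"
    using borel_measurable_mono[OF m] by measurable
  hence "(\<lambda>r. gammaf \<rho> (max 0 r)) \<in> borel_measurable borel" by simp
  hence "(\<lambda>x::'a. gammaf \<rho> (max 0 (norm x))) \<in> borel_measurable borel" by measurable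
  thus ?thesis by simp
qed

lemma rho'_meas:
  fixes \<rho> :: "real \<Rightarrow> real"
  assumes "continuous_on {0<..} \<rho>"
  shows "(\<lambda>r. indicator {0<..} r *\<^sub>R \<rho> r) \<in> borel_measurable borel"
  using borel_measurable_continuous_on_indicator[of "{0<..}" \<rho>] assms by auto

lemma pow_diff_le:
  fixes k :: real assumes "k \<ge> 0" "n \<ge> 1"
  shows "(k+1)^n - k^n \<le> real n * (k+1)^(n-1)"
  using assms(2)
proof (induction n rule: dec_induct)
  case base then show ?case by simp
next
  case (step n)
  have "(k+1)^Suc n - k^Suc n = (k+1)*((k+1)^n - k^n) + k^n" by (simp add: algebra_simps)
  also have "\<dots> \<le> (k+1)*(real n * (k+1)^(n-1)) + (k+1)^n"
    using step assms by (intro add_mono mult_left_mono power_mono) auto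
  also have "\<dots> = real (Suc n) * (k+1)^(Suc n - 1)"
    using step(1) by (cases n) (auto simp: algebra_simps)
  finally show ?case .
qed



lemma ennreal_term_le_suminf: "(f::nat \<Rightarrow> ennreal) k \<le> suminf f"
proof -
  have "(\<Sum>i\<in>{k}. f i) \<le> suminf f" by (rule sum_le_suminf) auto
  thus ?thesis by simp
qed

lemma shell_meas: "{x::'a::euclidean_space. a \<le> norm x \<and> norm x < b} \<in> sets lborel"
  by measurable

lemma shell_emeasure:
  assumes "0 \<le> a" "a \<le> b"
  shows "emeasure lborel {x::'a::euclidean_space. a \<le> norm x \<and> norm x < b}
     = ennreal (unit_ball_vol (DIM('a)) * (b ^ DIM('a) - a ^ DIM('a)))"
proof -
  have eq: "{x::'a. a \<le> norm x \<and> norm x < b} = ball 0 b - ball 0 a" by auto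
  have "a ^ DIM('a) \<le> b ^ DIM('a)" using assms by (intro power_mono) auto
  then show ?thesis unfolding eq using assms
    by (subst emeasure_Diff) (auto simp: emeasure_ball ennreal_minus[symmetric] algebra_simps)
qed



lemma Gamma_fin:
  fixes \<rho> :: "real \<Rightarrow> real"
  assumes rho_cont: "continuous_on {0<..} \<rho>"
    and rho_pos: "\<And>r. 0 < r \<Longrightarrow> 0 < \<rho> r"
    and rho_int1: "set_integrable lborel {0<..}
                     (\<lambda>r. \<rho> r * min 1 (r\<^sup>2) * r ^ (DIM('a) - 1))"
  shows "(\<integral>\<^sup>+x. ennreal (gammaf \<rho> (norm (x::'a::euclidean_space))) \<partial>lborel) < \<infinity>"
proof -
  define \<gamma> where "\<gamma> = gammaf \<rho>"
  define d where "d = DIM('a)"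
  define \<omega> where "\<omega> = unit_ball_vol d"
  define sh where "sh = (\<lambda>j::nat. {x::'a. real j \<le> norm x \<and> norm x < real j + 1})"
  define h1 where "h1 = (\<lambda>r. \<rho> r * min 1 (r\<^sup>2) * r ^ (DIM('a) - 1))"
  define h where "h = (\<lambda>s. ennreal (indicator {0<..} s *\<^sub>R \<rho> s * s ^ (d - 1)))"
  have d1: "d \<ge> 1" unfolding d_def using DIM_positive[where 'a='a] by linarith
  have om: "\<omega> \<ge> 0" unfolding \<omega>_def by simp
  have gmeas: "(\<lambda>x::'a. \<gamma> (norm x)) \<in> borel_measurable borel"
    unfolding \<gamma>_def by (rule gam_meas[OF rho_pos])
  have shm[measurable]: "\<And>j. sh j \<in> sets lborel" unfolding sh_def by (rule shell_meas)
  have pw: "ennreal (\<gamma> (norm x)) \<le> ennreal (\<gamma> 0) * indicator (ball (0::'a) 1) x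
      + (\<Sum>k. ennreal (\<gamma> (real (k+1))) * indicator (sh (k+1)) x)" for x :: 'a
  proof (cases "norm x < 1")
    case True
    then have "ennreal (\<gamma> (norm x)) \<le> ennreal (\<gamma> 0) * indicator (ball (0::'a) 1) x"
      by (auto simp: \<gamma>_def intro!: ennreal_leI gam_mono[OF rho_pos])
    then show ?thesis by (rule order_trans) (rule add_increasing2, auto)
  next
    case False
    define k where "k = nat \<lfloor>norm x\<rfloor> - 1"
    have fl: "1 \<le> \<lfloor>norm x\<rfloor>" using False by (simp add: le_floor_iff)
    have kx: "real (k+1) = of_int \<lfloor>norm x\<rfloor>" using fl unfolding k_def by simp
    have xin: "x \<in> sh (k+1)" unfolding sh_def using kx
      by simp
    have "ennreal (\<gamma> (norm x)) \<le> ennreal (\<gamma> (real (k+1))) * indicator (sh (k+1)) x"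
      using xin kx by (auto simp: \<gamma>_def sh_def intro!: ennreal_leI gam_mono[OF rho_pos])
    also have "\<dots> \<le> (\<Sum>k. ennreal (\<gamma> (real (k+1))) * indicator (sh (k+1)) x)"
      by (rule ennreal_term_le_suminf)
    finally show ?thesis by (rule order_trans) (rule add_increasing, auto)
  qed
  have I1: "(\<integral>\<^sup>+x. ennreal (\<gamma> (norm (x::'a))) \<partial>lborel) \<le> (\<integral>\<^sup>+x. ennreal (\<gamma> 0) * indicator (ball (0::'a) 1) x
      + (\<Sum>k. ennreal (\<gamma> (real (k+1))) * indicator (sh (k+1)) x) \<partial>lborel)"
    by (rule nn_integral_mono) (rule pw)
  also have "\<dots> = ennreal (\<gamma> 0) * emeasure lborel (ball (0::'a) 1)
      + (\<Sum>k. ennreal (\<gamma> (real (k+1))) * emeasure lborel (sh (k+1)))"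
  proof -
    have a1: "(\<integral>\<^sup>+x. ennreal (\<gamma> 0) * indicator (ball (0::'a) 1) x \<partial>lborel) = ennreal (\<gamma> 0) * emeasure lborel (ball (0::'a) 1)"
      by (rule nn_integral_cmult_indicator) simp
    have a2: "(\<integral>\<^sup>+x. (\<Sum>k. ennreal (\<gamma> (real (k+1))) * indicator (sh (k+1)) x) \<partial>lborel)
       = (\<Sum>k. \<integral>\<^sup>+x. ennreal (\<gamma> (real (k+1))) * indicator (sh (k+1)) x \<partial>lborel)"
      by (rule nn_integral_suminf) (use shm in auto)
    have a3: "(\<integral>\<^sup>+x. ennreal (\<gamma> (real (k+1))) * indicator (sh (k+1)) x \<partial>lborel) = ennreal (\<gamma> (real (k+1))) * emeasure lborel (sh (k+1))" for k
      by (rule nn_integral_cmult_indicator) (rule shm)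
    have m1: "(\<lambda>x. ennreal (\<gamma> 0) * indicator (ball (0::'a) 1) x) \<in> borel_measurable lborel" by (intro borel_measurable_times_ennreal borel_measurable_indicator) auto
    have m2: "(\<lambda>x. (\<Sum>k. ennreal (\<gamma> (real (k+1))) * indicator (sh (k+1)) x)) \<in> borel_measurable lborel"
      using shm by measurable
    show ?thesis by (simp only: nn_integral_add[OF m1 m2] a1 a2 a3)
  qed
  finally have I2: "(\<integral>\<^sup>+x. ennreal (\<gamma> (norm (x::'a))) \<partial>lborel) \<le> ennreal (\<gamma> 0) * emeasure lborel (ball (0::'a) 1)
      + (\<Sum>k. ennreal (\<gamma> (real (k+1))) * emeasure lborel (sh (k+1)))" .
  have "(\<Sum>k. ennreal (\<gamma> (real (k+1))) * emeasure lborel (sh (k+1)))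
      \<le> (\<Sum>k. ennreal (\<omega> * real d * 2 ^ (d - 1)) *
             (\<integral>\<^sup>+s. indicator {real k + 1..<real k + 2} s * h s \<partial>lborel))"
  proof (rule suminf_le)
    fix k :: nat
    have g0: "0 \<le> \<gamma> (real (k+1))" unfolding \<gamma>_def by (rule gam_nonneg[OF rho_pos]) auto
    have "emeasure lborel (sh (k+1)) = ennreal (\<omega> * ((real k + 2) ^ d - (real k + 1) ^ d))"
      unfolding sh_def \<omega>_def d_def by (subst shell_emeasure) (auto simp: add_ac)
    also have "\<dots> \<le> ennreal (\<omega> * (real d * 2 ^ (d - 1) * (real k + 1) ^ (d - 1)))"
    proof (intro ennreal_leI mult_left_mono om)
      have "(real k + 2) ^ d - (real k + 1) ^ d \<le> real d * (real k + 1 + 1) ^ (d - 1)"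
        using pow_diff_le[of "real k + 1" d] d1 by (simp add: add_ac)
      also have "\<dots> \<le> real d * (2 * (real k + 1)) ^ (d - 1)"
        by (intro mult_left_mono power_mono) auto
      also have "\<dots> = real d * 2 ^ (d - 1) * (real k + 1) ^ (d - 1)"
        by (simp only: power_mult_distrib mult.assoc)
      finally show "(real k + 2) ^ d - (real k + 1) ^ d \<le> real d * 2 ^ (d - 1) * (real k + 1) ^ (d - 1)" .
    qed
    finally have e1: "emeasure lborel (sh (k+1)) \<le> ennreal (\<omega> * real d * 2 ^ (d - 1)) * ennreal ((real k + 1) ^ (d - 1))"
      by (simp add: ennreal_mult[symmetric] mult_ac om)
    have e2: "ennreal (\<gamma> (real (k+1))) * ennreal ((real k + 1) ^ (d - 1))
        \<le> (\<integral>\<^sup>+s. indicator {real k + 1..<real k + 2} s * h s \<partial>lborel)"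
    proof -
      have "ennreal (\<gamma> (real (k+1))) * ennreal ((real k + 1) ^ (d - 1))
          = (\<integral>\<^sup>+s. ennreal (\<gamma> (real (k+1)) * (real k + 1) ^ (d - 1)) * indicator {real k + 1..<real k + 2} s \<partial>lborel)"
        by (subst nn_integral_cmult_indicator) (use g0 in \<open>auto simp: ennreal_mult\<close>)
      also have "\<dots> \<le> (\<integral>\<^sup>+s. indicator {real k + 1..<real k + 2} s * h s \<partial>lborel)"
      proof (rule nn_integral_mono)
        fix s show "ennreal (\<gamma> (real (k+1)) * (real k + 1) ^ (d - 1)) * indicator {real k + 1..<real k + 2} s
           \<le> indicator {real k + 1..<real k + 2} s * h s"
        proof (cases "s \<in> {real k + 1..<real k + 2}")
          case True
          have "\<gamma> (real (k+1)) \<le> \<rho> s" unfolding \<gamma>_def using True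
            by (intro gam_le[OF rho_pos]) auto
          moreover have "(real k + 1) ^ (d - 1) \<le> s ^ (d - 1)" using True by (intro power_mono) auto
          ultimately have "\<gamma> (real (k+1)) * (real k + 1) ^ (d - 1) \<le> \<rho> s * s ^ (d - 1)"
            using g0 by (intro mult_mono) auto
          then show ?thesis using True by (auto simp: h_def intro!: ennreal_leI)
        qed auto
      qed
      finally show ?thesis .
    qed
    have "ennreal (\<gamma> (real (k+1))) * emeasure lborel (sh (k+1))
       \<le> ennreal (\<gamma> (real (k+1))) * (ennreal (\<omega> * real d * 2 ^ (d - 1)) * ennreal ((real k + 1) ^ (d - 1)))"
      by (rule mult_left_mono[OF e1]) auto
    also have "\<dots> = ennreal (\<omega> * real d * 2 ^ (d - 1)) * (ennreal (\<gamma> (real (k+1))) * ennreal ((real k + 1) ^ (d - 1)))"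
      by (simp add: mult_ac)
    also have "\<dots> \<le> ennreal (\<omega> * real d * 2 ^ (d - 1)) * (\<integral>\<^sup>+s. indicator {real k + 1..<real k + 2} s * h s \<partial>lborel)"
      by (rule mult_left_mono[OF e2]) auto
    finally show "ennreal (\<gamma> (real (k+1))) * emeasure lborel (sh (k+1))
       \<le> ennreal (\<omega> * real d * 2 ^ (d - 1)) * (\<integral>\<^sup>+s. indicator {real k + 1..<real k + 2} s * h s \<partial>lborel)" .
  qed (rule summableI)+
  also have "(\<Sum>k. ennreal (\<omega> * real d * 2 ^ (d - 1)) *
             (\<integral>\<^sup>+s. indicator {real k + 1..<real k + 2} s * h s \<partial>lborel))
       = ennreal (\<omega> * real d * 2 ^ (d - 1)) * (\<integral>\<^sup>+s. (\<Sum>k. indicator {real k + 1..<real k + 2} s * h s) \<partial>lborel)"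
  proof -
    have hm: "h \<in> borel_measurable borel"
      unfolding h_def using rho'_meas[OF rho_cont] by measurable
    show ?thesis
      by (subst nn_integral_suminf) (use hm in \<open>auto simp: ennreal_suminf_cmult\<close>)
  qed
  finally have S0: "(\<Sum>k. ennreal (\<gamma> (real (k+1))) * emeasure lborel (sh (k+1)))
     \<le> ennreal (\<omega> * real d * 2 ^ (d - 1)) * (\<integral>\<^sup>+s. (\<Sum>k. indicator {real k + 1..<real k + 2} s * h s) \<partial>lborel)" .
  have P: "(\<integral>\<^sup>+s. (\<Sum>k. indicator {real k + 1..<real k + 2} s * h s) \<partial>lborel)
      \<le> (\<integral>\<^sup>+s. ennreal (norm (indicator {0<..} s *\<^sub>R h1 s)) \<partial>lborel)"
  proof (rule nn_integral_mono)
    fix s :: real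
    show "(\<Sum>k. indicator {real k + 1..<real k + 2} s * h s) \<le> ennreal (norm (indicator {0<..} s *\<^sub>R h1 s))"
    proof (cases "s < 1")
      case True
      then have "(\<lambda>k. indicator {real k + 1..<real k + 2} s * h s) = (\<lambda>k. 0 :: ennreal)"
        by (auto simp: fun_eq_iff indicator_def)
      then show ?thesis by simp
    next
      case False
      define j where "j = nat \<lfloor>s\<rfloor> - 1"
      have fl: "1 \<le> \<lfloor>s\<rfloor>" using False by (simp add: le_floor_iff)
      have ij: "int j + 1 = \<lfloor>s\<rfloor>" using fl unfolding j_def by linarith
      have "real j + 1 = real_of_int (int j + 1)" by simp
      then have kx: "real j + 1 = of_int \<lfloor>s\<rfloor>" using ij by simp
      have sj: "s \<in> {real j + 1..<real j + 2}" using kx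
        by simp (metis floor_correct of_int_1 of_int_add add.commute one_add_one add.left_commute)
      have "(\<Sum>k. indicator {real k + 1..<real k + 2} s * h s) = (\<Sum>k\<in>{j}. indicator {real k + 1..<real k + 2} s * h s)"
      proof (rule suminf_finite)
        fix n assume "n \<notin> {j}"
        have "s \<notin> {real n + 1..<real n + 2}"
        proof
          assume "s \<in> {real n + 1..<real n + 2}"
          then have "\<lfloor>s\<rfloor> = int n + 1" by (intro floor_unique) auto
          with ij have "j = n" by simp
          with \<open>n \<notin> {j}\<close> show False by simp
        qed
        then show "indicator {real n + 1..<real n + 2} s * h s = 0" by simp
      qed simp
      also have "\<dots> = h s" using sj by simp
      also have "\<dots> \<le> ennreal (norm (indicator {0<..} s *\<^sub>R h1 s))"
        using False by (auto simp: h_def h1_def d_def min_def intro!: ennreal_leI)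
      finally show ?thesis .
    qed
  qed
  have S1: "(\<Sum>k. ennreal (\<gamma> (real (k+1))) * emeasure lborel (sh (k+1)))
     \<le> ennreal (\<omega> * real d * 2 ^ (d - 1)) * (\<integral>\<^sup>+s. ennreal (norm (indicator {0<..} s *\<^sub>R h1 s)) \<partial>lborel)"
    by (rule order_trans[OF S0], rule mult_left_mono[OF P], simp)
  have S2: "(\<integral>\<^sup>+s. ennreal (norm (indicator {0<..} s *\<^sub>R h1 s)) \<partial>lborel) < \<infinity>"
    using rho_int1 unfolding set_integrable_def h1_def integrable_iff_bounded by simp
  have F1: "(\<Sum>k. ennreal (\<gamma> (real (k+1))) * emeasure lborel (sh (k+1))) < \<infinity>"
  proof -
    have "ennreal (\<omega> * real d * 2 ^ (d - 1)) * (\<integral>\<^sup>+s. ennreal (norm (indicator {0<..} s *\<^sub>R h1 s)) \<partial>lborel) < \<infinity>"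
      using S2 by (simp add: ennreal_mult_less_top)
    with S1 show ?thesis by (rule le_less_trans)
  qed
  have F2: "ennreal (\<gamma> 0) * emeasure lborel (ball (0::'a) 1) < \<infinity>"
    by (simp add: emeasure_ball ennreal_mult_less_top)
  have "ennreal (\<gamma> 0) * emeasure lborel (ball (0::'a) 1)
      + (\<Sum>k. ennreal (\<gamma> (real (k+1))) * emeasure lborel (sh (k+1))) < \<infinity>"
    using F1 F2 by simp
  with I2 show ?thesis unfolding \<gamma>_def by (rule le_less_trans)
qed



lemma CS_real:
  fixes u w :: "'b \<Rightarrow> real"
  assumes [measurable]: "u \<in> borel_measurable M" "w \<in> borel_measurable M"
    and "\<And>x. 0 \<le> u x" "\<And>x. 0 \<le> w x"
  shows "(\<integral>\<^sup>+x. ennreal (u x * w x) \<partial>M)\<^sup>2 \<le> (\<integral>\<^sup>+x. ennreal ((u x)\<^sup>2) \<partial>M) * (\<integral>\<^sup>+x. ennreal ((w x)\<^sup>2) \<partial>M)"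
  using Cauchy_Schwarz_nn_integral[of "\<lambda>x. ennreal (u x)" M "\<lambda>x. ennreal (w x)"] assms
  by (simp add: ennreal_mult ennreal_power)

lemma K_fin:
  fixes V :: "'a::euclidean_space \<Rightarrow> real" and \<rho> :: "real \<Rightarrow> real"
  assumes V_meas[measurable]: "V \<in> borel_measurable borel"
    and expV_bdd: "\<And>x. exp (- V x) \<le> E"
    and rho_pos: "\<And>r. 0 < r \<Longrightarrow> 0 < \<rho> r"
    and gamma_pos: "\<And>r. 0 < r \<Longrightarrow> 0 < gammaf \<rho> r"
    and gamma_int: "set_integrable lborel {x. norm x > 1}
                     (\<lambda>x. exp (- 2 * V x) / gammaf \<rho> (norm x))"
  shows "(\<integral>\<^sup>+x. ennreal (exp (- 2 * V x) / gammaf \<rho> (norm x)) \<partial>lborel) < \<infinity>"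
proof -
  define \<gamma> where "\<gamma> = gammaf \<rho>"
  define q where "q = (\<lambda>x. exp (- 2 * V x) / \<gamma> (norm x))"
  have g1: "0 < \<gamma> 1" unfolding \<gamma>_def by (rule gamma_pos) simp
  have gm[measurable]: "(\<lambda>x::'a. \<gamma> (norm x)) \<in> borel_measurable borel"
    unfolding \<gamma>_def by (rule gam_meas[OF rho_pos])
  have [measurable]: "cball (0::'a) 1 \<in> sets borel" by simp
  have pw: "ennreal (q x) \<le> ennreal (norm (indicator {x. norm x > 1} x *\<^sub>R q x))
       + ennreal (E^2 / \<gamma> 1) * indicator (cball 0 1) x" for x
  proof (cases "norm x > 1")
    case True
    have "0 < \<gamma> (norm x)" unfolding \<gamma>_def using True by (intro gamma_pos) auto
    with True show ?thesis by (auto simp: q_def intro!: ennreal_leI add_increasing2)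
  next
    case False
    have gx: "\<gamma> 1 \<le> \<gamma> (norm x)" unfolding \<gamma>_def using False norm_ge_zero[of x]
      by (intro gam_mono[OF rho_pos]) linarith+
    have e2: "exp (- 2 * V x) = (exp (- V x))\<^sup>2" by (simp add: power2_eq_square exp_add[symmetric])
    have "exp (- 2 * V x) \<le> E^2" unfolding e2
      by (rule power_mono[OF expV_bdd]) simp
    then have "q x \<le> E^2 / \<gamma> 1" unfolding q_def using g1 gx
      by (intro frac_le) auto
    then have "ennreal (q x) \<le> ennreal (E^2 / \<gamma> 1) * indicator (cball 0 1) x"
      using False by (auto intro!: ennreal_leI)
    then show ?thesis by (rule order_trans) (rule add_increasing, auto)
  qed
  have "(\<integral>\<^sup>+x. ennreal (q x) \<partial>lborel) \<le> (\<integral>\<^sup>+x. ennreal (norm (indicator {x. norm x > 1} x *\<^sub>R q x))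
       + ennreal (E^2 / \<gamma> 1) * indicator (cball 0 1) x \<partial>lborel)"
    by (rule nn_integral_mono) (rule pw)
  also have "\<dots> = (\<integral>\<^sup>+x. ennreal (norm (indicator {x. norm x > 1} x *\<^sub>R q x)) \<partial>lborel)
      + ennreal (E^2 / \<gamma> 1) * emeasure lborel (cball (0::'a) 1)"
    by (subst nn_integral_add) (auto simp: q_def nn_integral_cmult_indicator)
  also have "\<dots> < \<infinity>"
  proof -
    have "(\<integral>\<^sup>+x. ennreal (norm (indicator {x. norm x > 1} x *\<^sub>R q x)) \<partial>lborel) < \<infinity>"
      using gamma_int unfolding set_integrable_def integrable_iff_bounded q_def \<gamma>_def by simp
    moreover have "ennreal (E^2 / \<gamma> 1) * emeasure lborel (cball (0::'a) 1) < \<infinity>"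
      by (simp add: emeasure_cball ennreal_mult_less_top)
    ultimately show ?thesis by simp
  qed
  finally show ?thesis unfolding q_def \<gamma>_def .
qed



lemma two_half: "(2::ennreal) * (1/2 * x) = x"
proof -
  have "(2::ennreal) * (1/2) = 1" by (simp add: ennreal_times_divide ennreal_divide_self)
  then show ?thesis by (simp add: mult.assoc[symmetric])
qed

lemma sq_le: "(p + q)^2 \<le> 2 * p^2 + 2 * (q::real)^2"
proof -
  have "0 \<le> (p - q)^2" by simp
  then show ?thesis by (simp add: power2_eq_square algebra_simps)
qed

lemma step1a:
  fixes f :: "'a::euclidean_space \<Rightarrow> real"
  assumes fm[measurable]: "f \<in> borel_measurable borel" and fb: "\<And>x. \<bar>f x\<bar> \<le> Bf"
  shows "ennreal ((f x - (\<integral>w. indicator (cball 0 1) w * f w / unit_ball_vol DIM('a) \<partial>lborel))\<^sup>2)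
     \<le> ennreal (1 / unit_ball_vol DIM('a)) * (\<integral>\<^sup>+w. ennreal (indicator (cball 0 1) w * (f x - f w)\<^sup>2) \<partial>lborel)"
proof -
  define v where "v = unit_ball_vol DIM('a)"
  define B where "B = cball (0::'a) 1"
  define c where "c = (\<integral>w. indicator B w * f w / v \<partial>lborel)"
  have v0: "0 < v" unfolding v_def by simp
  have Bm[measurable]: "B \<in> sets borel" unfolding B_def by simp
  have Be: "emeasure lborel B = ennreal v" unfolding B_def v_def by (simp add: emeasure_cball)
  have Bmeas: "measure lborel B = v" unfolding measure_def Be using v0 by simp
  have Bfin: "emeasure lborel B < \<infinity>" unfolding Be by simp
  have iB: "integrable lborel (indicator B :: 'a \<Rightarrow> real)"
    by (rule integrable_real_indicator) (use Bfin in auto)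
  have iB2: "integrable lborel (\<lambda>w. (K::real) * indicator B w)" for K
    using iB by simp
  have int1: "integrable lborel (\<lambda>w. indicator B w * f w / v)"
  proof (rule Bochner_Integration.integrable_bound[OF iB2[of "Bf / v"]])
    show "AE w in lborel. norm (indicator B w * f w / v) \<le> norm (Bf / v * indicator B w)"
      using fb v0 by (auto simp: indicator_def abs_mult intro!: AE_I2 divide_right_mono order_trans[OF fb abs_ge_self])
  qed measurable
  have int2: "integrable lborel (\<lambda>w. indicator B w * f x / v)"
    using iB2[of "f x / v"] by (simp add: mult_ac)
  have eq: "f x - c = (\<integral>w. indicator B w * (f x - f w) / v \<partial>lborel)"
  proof -
    have "(\<integral>w. indicator B w * (f x - f w) / v \<partial>lborel)
       = (\<integral>w. indicator B w * f x / v - indicator B w * f w / v \<partial>lborel)"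
      by (simp add: algebra_simps diff_divide_distrib)
    also have "\<dots> = (\<integral>w. indicator B w * f x / v \<partial>lborel) - c"
      unfolding c_def by (rule Bochner_Integration.integral_diff[OF int2 int1])
    also have "(\<integral>w. indicator B w * f x / v \<partial>lborel) = (\<integral>w. indicator B w \<partial>lborel) * (f x / v)"
      by (simp add: mult_ac)
    also have "(\<integral>w. indicator B w \<partial>lborel) = v"
      using has_bochner_integral_real_indicator[OF _ Bfin] Bmeas
      by (simp add: has_bochner_integral_iff)
    finally show ?thesis using v0 by simp
  qed
  have int3: "integrable lborel (\<lambda>w. indicator B w * (f x - f w) / v)"
  proof -
    have "integrable lborel (\<lambda>w. indicator B w * f x / v - indicator B w * f w / v)"
      using int1 int2 by simp
    thus ?thesis by (simp add: algebra_simps diff_divide_distrib)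
  qed
  have "ennreal (\<bar>f x - c\<bar>) \<le> (\<integral>\<^sup>+w. ennreal (norm (indicator B w * (f x - f w) / v)) \<partial>lborel)"
    unfolding eq using integral_norm_bound_ennreal[OF int3] by simp
  also have "\<dots> = (\<integral>\<^sup>+w. ennreal ((indicator B w / v) * (indicator B w * \<bar>f x - f w\<bar>)) \<partial>lborel)"
    by (intro nn_integral_cong) (use v0 in \<open>auto simp: indicator_def abs_mult\<close>)
  finally have s1: "ennreal (\<bar>f x - c\<bar>) \<le> \<dots>" .
  have "(ennreal (\<bar>f x - c\<bar>))\<^sup>2 \<le> (\<integral>\<^sup>+w. ennreal ((indicator B w / v) * (indicator B w * \<bar>f x - f w\<bar>)) \<partial>lborel)\<^sup>2"
    by (rule power_mono[OF s1]) simp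
  also have "\<dots> \<le> (\<integral>\<^sup>+w. ennreal ((indicator B w / v)\<^sup>2) \<partial>lborel) * (\<integral>\<^sup>+w. ennreal ((indicator B w * \<bar>f x - f w\<bar>)\<^sup>2) \<partial>lborel)"
    by (rule CS_real) (use v0 in auto)
  also have "(\<integral>\<^sup>+w. ennreal ((indicator B w / v)\<^sup>2) \<partial>lborel) = ennreal (1 / v)"
  proof -
    have "(\<integral>\<^sup>+w. ennreal ((indicator B w / v)\<^sup>2) \<partial>lborel) = (\<integral>\<^sup>+w. ennreal (1 / v^2) * indicator B w \<partial>lborel)"
      by (intro nn_integral_cong) (auto simp: indicator_def power_divide)
    also have "\<dots> = ennreal (1 / v^2) * ennreal v" using Be by (subst nn_integral_cmult_indicator) auto
    also have "\<dots> = ennreal (1 / v)" using v0 by (simp add: ennreal_mult[symmetric] power2_eq_square)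
    finally show ?thesis .
  qed
  also have "(\<integral>\<^sup>+w. ennreal ((indicator B w * \<bar>f x - f w\<bar>)\<^sup>2) \<partial>lborel)
      = (\<integral>\<^sup>+w. ennreal (indicator B w * (f x - f w)\<^sup>2) \<partial>lborel)"
    by (intro nn_integral_cong) (auto simp: indicator_def)
  also have "(ennreal (\<bar>f x - c\<bar>))\<^sup>2 = ennreal ((f x - c)\<^sup>2)"
    by (simp add: ennreal_power)
  finally show ?thesis unfolding c_def v_def B_def .
qed



theorem theorem4p1:
  fixes V :: "'a::euclidean_space \<Rightarrow> real" and \<rho> :: "real \<Rightarrow> real" and \<alpha>0 :: real
  assumes V_meas: "V \<in> borel_measurable lborel"
    and V_locbdd: "\<And>K. compact K \<Longrightarrow> bounded (V ` K)"
    and expV_bdd: "bounded (range (\<lambda>x. exp (- V x)))"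
    and expV_int: "integrable lborel (\<lambda>x. exp (- V x))"
    and rho_cont: "continuous_on {0<..} \<rho>"
    and rho_pos: "\<And>r. 0 < r \<Longrightarrow> 0 < \<rho> r"
    and rho_int1: "set_integrable lborel {0<..}
                     (\<lambda>r. \<rho> r * min 1 (r\<^sup>2) * r ^ (DIM('a) - 1))"
    and rho_int2: "set_integrable lborel {0<..1} (\<lambda>r. r ^ (DIM('a) - 1) / \<rho> r)"
    and gamma_pos: "\<And>r. 0 < r \<Longrightarrow> 0 < gammaf \<rho> r"
    and gamma_int: "set_integrable lborel {x. norm x > 1}
                     (\<lambda>x. exp (- 2 * V x) / gammaf \<rho> (norm x))"
    and alpha0: "0 < \<alpha>0" "\<alpha>0 < 1"
    and rho_int3: "set_integrable lborel {1..}
                     (\<lambda>r. r powr (real DIM('a) + \<alpha>0 - 1) * \<rho> r)"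
    and tail: "((\<lambda>x::'a. (SUP z\<in>{z. norm z \<ge> norm x}. exp (- V z))
                      / (gammaf \<rho> (norm x) * norm x powr \<alpha>0)) \<longlongrightarrow> 0) at_infinity"
  shows "\<exists>C1>0. \<forall>f\<in>Cb_inf.
           (\<integral>\<^sup>+x. ennreal ((f x - muV_int V f)\<^sup>2 * exp (V x) * gammaf \<rho> (norm x)) \<partial>muV V)
             \<le> ennreal C1 * Dform \<rho> V f"
proof -
  define \<gamma> where "\<gamma> = gammaf \<rho>"
  define Z where "Z = ZV V"
  define v where "v = unit_ball_vol DIM('a)"
  define B where "B = cball (0::'a) 1"
  define \<rho>' where "\<rho>' = (\<lambda>r. indicator {0<..} r *\<^sub>R \<rho> r)"
  have Vm[measurable]: "V \<in> borel_measurable borel" using V_meas by simp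
  have \<rho>'m[measurable]: "\<rho>' \<in> borel_measurable borel" unfolding \<rho>'_def by (rule rho'_meas[OF rho_cont])
  have gm[measurable]: "(\<lambda>x::'a. \<gamma> (norm x)) \<in> borel_measurable borel"
    unfolding \<gamma>_def by (rule gam_meas[OF rho_pos])
  have Bm[measurable]: "B \<in> sets borel" unfolding B_def by simp
  have v0: "0 < v" unfolding v_def by simp
  have Be: "emeasure lborel B = ennreal v" unfolding B_def v_def by (simp add: emeasure_cball)
  obtain E where E: "\<And>x. exp (- V x) \<le> E"
    using expV_bdd unfolding bounded_iff by auto
  have "bounded (V ` B)" unfolding B_def by (rule V_locbdd) simp
  then obtain M0 where M0': "\<forall>y\<in>V ` B. norm y \<le> M0" unfolding bounded_iff by blast
  have M0: "\<And>x. x \<in> B \<Longrightarrow> V x \<le> M0"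
    using M0' by (auto intro: order_trans[OF abs_ge_self])
  define m0 where "m0 = exp (- M0)"
  have m00: "0 < m0" unfolding m0_def by simp
  have m0le: "\<And>x. x \<in> B \<Longrightarrow> m0 \<le> exp (- V x)" unfolding m0_def using M0 by simp
  have gpos: "0 < \<gamma> (norm x)" for x :: 'a
  proof (cases "x = 0")
    case True
    have "0 < \<gamma> 1" unfolding \<gamma>_def by (rule gamma_pos) simp
    also have "\<gamma> 1 \<le> \<gamma> 0" unfolding \<gamma>_def by (rule gam_mono[OF rho_pos]) auto
    finally show ?thesis using True by simp
  next
    case False then show ?thesis unfolding \<gamma>_def by (intro gamma_pos) simp
  qed
  have Zeq: "ennreal Z = (\<integral>\<^sup>+x. ennreal (exp (- V x)) \<partial>lborel)"
    unfolding Z_def ZV_def by (rule nn_integral_eq_integral[symmetric]) (use expV_int in auto)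
  have Z0: "0 < Z"
  proof -
    have "0 < ennreal m0 * ennreal v" using m00 v0 by (simp add: ennreal_mult[symmetric])
    also have "ennreal m0 * ennreal v = (\<integral>\<^sup>+x. ennreal m0 * indicator B x \<partial>lborel)"
      using Be by (subst nn_integral_cmult_indicator) auto
    also have "\<dots> \<le> ennreal Z" unfolding Zeq
      by (intro nn_integral_mono) (auto simp: indicator_def m0le)
    finally show ?thesis by simp
  qed
  obtain Gr where Gr: "(\<integral>\<^sup>+x. ennreal (\<gamma> (norm (x::'a))) \<partial>lborel) = ennreal Gr" "0 \<le> Gr"
    using Gamma_fin[OF rho_cont rho_pos rho_int1] by (auto simp: less_top_ennreal \<gamma>_def)
  obtain Kr where Kr: "(\<integral>\<^sup>+x. ennreal (exp (- 2 * V x) / \<gamma> (norm x)) \<partial>lborel) = ennreal Kr" "0 \<le> Kr"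
    using K_fin[OF Vm E rho_pos gamma_pos gamma_int] by (auto simp: less_top_ennreal \<gamma>_def)
  define C0 where "C0 = 2 / Z + 2 / Z * (1 / Z^2) * Kr * Gr"
  define C1 where "C1 = C0 * (2 * Z / (v * m0))"
  have C00: "0 < C0" unfolding C0_def using Z0 Kr Gr by (intro add_pos_nonneg) auto
  have C10: "0 < C1" unfolding C1_def using C00 Z0 v0 m00 by simp
  show ?thesis
  proof (intro exI[of _ C1] conjI ballI C10)
    fix f :: "'a \<Rightarrow> real" assume "f \<in> Cb_inf"
    then obtain g where "g [] = f" "continuous_on UNIV (g [])" "bounded (range (g []))"
      unfolding Cb_inf_def by fastforce
    then have fc: "continuous_on UNIV f" and fbd: "bounded (range f)" by auto
    have fm[measurable]: "f \<in> borel_measurable borel" by (rule borel_measurable_continuous_onI[OF fc])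
    obtain Bf where fb: "\<And>x. \<bar>f x\<bar> \<le> Bf" using fbd unfolding bounded_iff by auto
    define c where "c = (\<integral>w. indicator B w * f w / v \<partial>lborel)"
    define a where "a = muV_int V f"
    define D where "D = Dform \<rho> V f"
    define A where "A = (\<integral>\<^sup>+x. ennreal ((f x - c)\<^sup>2 * \<gamma> (norm x)) \<partial>lborel)"
    define F where "F = (\<lambda>w y. ennreal (1 / m0 * (exp (- V w) * ((f y - f w)\<^sup>2 * \<rho>' (norm (w - y))))))"
    define inner where "inner = (\<lambda>w. \<integral>\<^sup>+y. ennreal ((f y - f w)\<^sup>2 * \<rho>' (norm (w - y))) \<partial>lborel)"
    have Fm: "(\<lambda>(w, y). F w y) \<in> borel_measurable (lborel \<Otimes>\<^sub>M lborel)"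
      unfolding F_def by measurable
    have innerm[measurable]: "inner \<in> borel_measurable lborel"
      unfolding inner_def by measurable
    have rr: "(f y - f w)\<^sup>2 * \<rho>' (norm (w - y)) = (f y - f w)\<^sup>2 * \<rho> (norm (w - y))" for w y
      by (cases "w = y") (auto simp: \<rho>'_def)
    have Deq: "D = 1/2 * (\<integral>\<^sup>+w. inner w \<partial>muV V)"
      unfolding D_def Dform_def inner_def
      by (intro arg_cong2[where f="(*)"] refl nn_integral_cong) (simp add: rr norm_minus_commute)
    have A1: "A \<le> (\<integral>\<^sup>+x. ennreal (1 / v) * (\<integral>\<^sup>+w. ennreal (\<gamma> (norm x) * (indicator B w * (f x - f w)\<^sup>2)) \<partial>lborel) \<partial>lborel)"
      unfolding A_def
    proof (rule nn_integral_mono)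
      fix x :: 'a
      have "ennreal ((f x - c)\<^sup>2 * \<gamma> (norm x)) = ennreal (\<gamma> (norm x)) * ennreal ((f x - c)\<^sup>2)"
        using gpos[of x] by (simp add: ennreal_mult[symmetric] mult.commute)
      also have "\<dots> \<le> ennreal (\<gamma> (norm x)) * (ennreal (1 / v) * (\<integral>\<^sup>+w. ennreal (indicator B w * (f x - f w)\<^sup>2) \<partial>lborel))"
        by (rule mult_left_mono) (use step1a[OF fm fb, of x] in \<open>simp_all add: c_def B_def v_def\<close>)
      also have "\<dots> = ennreal (1 / v) * (\<integral>\<^sup>+w. ennreal (\<gamma> (norm x)) * ennreal (indicator B w * (f x - f w)\<^sup>2) \<partial>lborel)"
        by (subst nn_integral_cmult) (auto simp: mult_ac)
      also have "\<dots> = ennreal (1 / v) * (\<integral>\<^sup>+w. ennreal (\<gamma> (norm x) * (indicator B w * (f x - f w)\<^sup>2)) \<partial>lborel)"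
        using gpos[of x] by (simp add: ennreal_mult)
      finally show "ennreal ((f x - c)\<^sup>2 * \<gamma> (norm x)) \<le> \<dots>" .
    qed
    also have "\<dots> = ennreal (1 / v) * (\<integral>\<^sup>+x. (\<integral>\<^sup>+w. ennreal (\<gamma> (norm x) * (indicator B w * (f x - f w)\<^sup>2)) \<partial>lborel) \<partial>lborel)"
      by (rule nn_integral_cmult) measurable
    also have "\<dots> \<le> ennreal (1 / v) * (\<integral>\<^sup>+y. (\<integral>\<^sup>+w. F w y \<partial>lborel) \<partial>lborel)"
    proof (intro mult_left_mono nn_integral_mono)
      fix y w :: 'a
      show "ennreal (\<gamma> (norm y) * (indicator B w * (f y - f w)\<^sup>2)) \<le> F w y"
        unfolding F_def
      proof (intro ennreal_leI)
        show "\<gamma> (norm y) * (indicator B w * (f y - f w)\<^sup>2) \<le> 1 / m0 * (exp (- V w) * ((f y - f w)\<^sup>2 * \<rho>' (norm (w - y))))"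
        proof (cases "w \<in> B \<and> w \<noteq> y")
          case True
          have nw: "norm w \<le> 1" using True unfolding B_def by simp
          have "\<gamma> (norm y) \<le> \<rho> (norm (w - y))" unfolding \<gamma>_def
            using True norm_triangle_ineq4[of w y] nw by (intro gam_le[OF rho_pos]) auto
          then have g1: "\<gamma> (norm y) \<le> \<rho>' (norm (w - y))" using True by (simp add: \<rho>'_def)
          have e1: "1 \<le> 1 / m0 * exp (- V w)" using m0le[of w] True m00 by (simp add: field_simps)
          have "\<gamma> (norm y) * (indicator B w * (f y - f w)\<^sup>2) = 1 * ((f y - f w)\<^sup>2 * \<gamma> (norm y))"
            using True by simp
          also have "\<dots> \<le> (1 / m0 * exp (- V w)) * ((f y - f w)\<^sup>2 * \<rho>' (norm (w - y)))"
            using e1 g1 gpos[of y] by (intro mult_mono mult_left_mono) auto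
          finally show ?thesis by (simp add: mult_ac)
        next
          case False
          have "0 \<le> \<rho>' (norm (w - y))" using rho_pos by (auto simp: \<rho>'_def indicator_def less_imp_le)
          then have "0 \<le> 1 / m0 * (exp (- V w) * ((f y - f w)\<^sup>2 * \<rho>' (norm (w - y))))"
            using m00 by simp
          moreover have "\<gamma> (norm y) * (indicator B w * (f y - f w)\<^sup>2) = 0" using False by auto
          ultimately show ?thesis by linarith
        qed
      qed
    qed simp
    also have "(\<integral>\<^sup>+y. (\<integral>\<^sup>+w. F w y \<partial>lborel) \<partial>lborel) = (\<integral>\<^sup>+w. (\<integral>\<^sup>+y. F w y \<partial>lborel) \<partial>lborel)"
      by (rule lborel_pair.Fubini'[OF Fm])
    also have "\<dots> = (\<integral>\<^sup>+w. ennreal (Z / m0) * (ennreal (exp (- V w) / Z) * inner w) \<partial>lborel)"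
    proof (rule nn_integral_cong)
      fix w :: 'a
      have "(\<integral>\<^sup>+y. F w y \<partial>lborel) = (\<integral>\<^sup>+y. ennreal (Z / m0 * (exp (- V w) / Z)) * ennreal ((f y - f w)\<^sup>2 * \<rho>' (norm (w - y))) \<partial>lborel)"
        unfolding F_def
      proof (intro nn_integral_cong)
        fix y
        have "1 / m0 * (exp (- V w) * ((f y - f w)\<^sup>2 * \<rho>' (norm (w - y))))
           = (Z / m0 * (exp (- V w) / Z)) * ((f y - f w)\<^sup>2 * \<rho>' (norm (w - y)))"
          using Z0 m00 by (simp add: field_simps)
        moreover have "0 \<le> Z / m0 * (exp (- V w) / Z)" using Z0 m00 by simp
        ultimately show "ennreal (1 / m0 * (exp (- V w) * ((f y - f w)\<^sup>2 * \<rho>' (norm (w - y)))))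
           = ennreal (Z / m0 * (exp (- V w) / Z)) * ennreal ((f y - f w)\<^sup>2 * \<rho>' (norm (w - y)))"
          by (simp add: ennreal_mult')
      qed
      also have "\<dots> = ennreal (Z / m0 * (exp (- V w) / Z)) * inner w"
        unfolding inner_def by (rule nn_integral_cmult) measurable
      also have "\<dots> = ennreal (Z / m0) * (ennreal (exp (- V w) / Z) * inner w)"
      proof -
        have h: "ennreal (Z / m0 * (exp (- V w) / Z)) = ennreal (Z / m0) * ennreal (exp (- V w) / Z)"
          using Z0 m00 by (intro ennreal_mult) auto
        show ?thesis unfolding h by (simp only: mult.assoc)
      qed
      finally show "(\<integral>\<^sup>+y. F w y \<partial>lborel) = \<dots>" .
    qed
    also have "\<dots> = ennreal (Z / m0) * (\<integral>\<^sup>+w. inner w \<partial>muV V)"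
      unfolding muV_def Z_def by (subst nn_integral_cmult) (auto simp: nn_integral_density)
    also have "(\<integral>\<^sup>+w. inner w \<partial>muV V) = 2 * D"
      unfolding Deq by (rule two_half[symmetric])
    finally have A_le0: "A \<le> ennreal (1 / v) * (ennreal (Z / m0) * (2 * D))" .
    have A_le: "A \<le> ennreal (2 * Z / (v * m0)) * D"
    proof -
      have h1: "ennreal (1 / v * (Z / m0) * 2) = ennreal (1 / v * (Z / m0)) * ennreal 2"
        using v0 Z0 m00 by (intro ennreal_mult) auto
      have h2: "ennreal (1 / v * (Z / m0)) = ennreal (1 / v) * ennreal (Z / m0)"
        using v0 Z0 m00 by (intro ennreal_mult) auto
      have "ennreal (1 / v) * (ennreal (Z / m0) * (2 * D)) = ennreal (1 / v * (Z / m0) * 2) * D"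
        unfolding h1 h2 by (simp only: ennreal_numeral mult_ac)
      also have "1 / v * (Z / m0) * 2 = 2 * Z / (v * m0)" by simp
      finally show ?thesis using A_le0 by simp
    qed
    have ie: "integrable lborel (\<lambda>x. exp (- V x) / Z * h)" for h
      using expV_int by (simp add: mult.commute)
    have ief: "integrable lborel (\<lambda>x. exp (- V x) / Z * f x)"
    proof (rule Bochner_Integration.integrable_bound[OF ie[of Bf]])
      show "AE x in lborel. norm (exp (- V x) / Z * f x) \<le> norm (exp (- V x) / Z * Bf)"
        using fb Z0 by (auto simp: abs_mult intro!: AE_I2 divide_right_mono mult_left_mono order_trans[OF fb abs_ge_self])
    qed measurable
    have aeq: "a = (\<integral>x. exp (- V x) / Z * f x \<partial>lborel)"
      unfolding a_def muV_int_def muV_def Z_def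
      by (subst integral_density) (auto simp: Z_def[symmetric] intro!: divide_nonneg_pos Z0)
    have one: "(\<integral>x. exp (- V x) / Z \<partial>lborel) = 1"
      using Z0 unfolding Z_def ZV_def by simp
    have ceq: "c = (\<integral>x. exp (- V x) / Z * c \<partial>lborel)"
      using one by simp
    have cma: "c - a = (\<integral>x. exp (- V x) / Z * (c - f x) \<partial>lborel)"
      unfolding aeq
      apply (subst ceq)
      apply (subst Bochner_Integration.integral_diff[OF ie ief, symmetric])
      by (rule Bochner_Integration.integral_cong) (simp_all add: right_diff_distrib)
    have int4: "integrable lborel (\<lambda>x. exp (- V x) / Z * (c - f x))"
    proof -
      have eqf: "(\<lambda>x. exp (- V x) / Z * (c - f x)) = (\<lambda>x. exp (- V x) / Z * c - exp (- V x) / Z * f x)"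
        by (simp add: fun_eq_iff right_diff_distrib)
      show ?thesis unfolding eqf using ie ief by (rule Bochner_Integration.integrable_diff)
    qed
    define u where "u = (\<lambda>x. \<bar>f x - c\<bar> * sqrt (\<gamma> (norm x)))"
    define w where "w = (\<lambda>x. exp (- V x) / Z / sqrt (\<gamma> (norm x)))"
    have sq: "0 < sqrt (\<gamma> (norm x))" for x :: 'a using gpos[of x] by simp
    have "ennreal (\<bar>c - a\<bar>) \<le> (\<integral>\<^sup>+x. ennreal (norm (exp (- V x) / Z * (c - f x))) \<partial>lborel)"
      unfolding cma using integral_norm_bound_ennreal[OF int4] by simp
    also have "\<dots> = (\<integral>\<^sup>+x. ennreal (u x * w x) \<partial>lborel)"
    proof (intro nn_integral_cong)
      fix x
      show "ennreal (norm (exp (- V x) / Z * (c - f x))) = ennreal (u x * w x)"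
      proof -
        have r1: "norm (exp (- V x) / Z * (c - f x)) = exp (- V x) / Z * \<bar>f x - c\<bar>"
          using Z0 by (simp add: abs_mult abs_minus_commute)
        have r2: "u x * w x = exp (- V x) / Z * \<bar>f x - c\<bar>"
          unfolding u_def w_def using sq[of x] by (simp add: field_simps)
        show ?thesis by (simp only: r1 r2)
      qed
    qed
    finally have s1: "ennreal (\<bar>c - a\<bar>) \<le> (\<integral>\<^sup>+x. ennreal (u x * w x) \<partial>lborel)" .
    have "ennreal ((c - a)\<^sup>2) = (ennreal (\<bar>c - a\<bar>))\<^sup>2" by (simp add: ennreal_power)
    also have "\<dots> \<le> (\<integral>\<^sup>+x. ennreal (u x * w x) \<partial>lborel)\<^sup>2"
      by (rule power_mono[OF s1]) simp
    also have "\<dots> \<le> (\<integral>\<^sup>+x. ennreal ((u x)\<^sup>2) \<partial>lborel) * (\<integral>\<^sup>+x. ennreal ((w x)\<^sup>2) \<partial>lborel)"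
      by (rule CS_real) (auto simp: u_def w_def intro!: mult_nonneg_nonneg divide_nonneg_pos mult_pos_pos sq Z0 less_imp_le[OF sq])
    also have "(\<integral>\<^sup>+x. ennreal ((u x)\<^sup>2) \<partial>lborel) = A"
      unfolding A_def u_def using gpos by (intro nn_integral_cong) (simp add: power_mult_distrib less_imp_le)
    also have "(\<integral>\<^sup>+x. ennreal ((w x)\<^sup>2) \<partial>lborel) = (\<integral>\<^sup>+x. ennreal (1 / Z^2) * ennreal (exp (- 2 * V x) / \<gamma> (norm x)) \<partial>lborel)"
    proof (intro nn_integral_cong)
      fix x
      have "(w x)\<^sup>2 = 1 / Z^2 * (exp (- 2 * V x) / \<gamma> (norm x))"
        unfolding w_def using gpos[of x] Z0
        by (simp add: power_divide power2_eq_square exp_add[symmetric] less_imp_le)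
      moreover have "ennreal (1 / Z^2 * (exp (- 2 * V x) / \<gamma> (norm x))) = ennreal (1 / Z^2) * ennreal (exp (- 2 * V x) / \<gamma> (norm x))"
        by (rule ennreal_mult') simp
      ultimately show "ennreal ((w x)\<^sup>2) = ennreal (1 / Z^2) * ennreal (exp (- 2 * V x) / \<gamma> (norm x))"
        by (simp only:)
    qed
    also have "\<dots> = ennreal (1 / Z^2) * ennreal Kr"
      by (subst nn_integral_cmult) (measurable, simp only: Kr(1))
    finally have ca: "ennreal ((c - a)\<^sup>2) \<le> A * ennreal (1 / Z^2) * ennreal Kr"
      by (simp only: mult.assoc)
    have "(\<integral>\<^sup>+x. ennreal ((f x - a)\<^sup>2 * exp (V x) * \<gamma> (norm x)) \<partial>muV V)
        = (\<integral>\<^sup>+x. ennreal (exp (- V x) / Z) * ennreal ((f x - a)\<^sup>2 * exp (V x) * \<gamma> (norm x)) \<partial>lborel)"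
      unfolding muV_def Z_def by (rule nn_integral_density) measurable
    also have "\<dots> \<le> (\<integral>\<^sup>+x. ennreal (2 / Z) * ennreal ((f x - c)\<^sup>2 * \<gamma> (norm x))
                    + ennreal (2 / Z * (c - a)\<^sup>2) * ennreal (\<gamma> (norm x)) \<partial>lborel)"
    proof (rule nn_integral_mono)
      fix x :: 'a
      have g: "0 \<le> \<gamma> (norm x)" using gpos[of x] by simp
      have "ennreal (exp (- V x) / Z) * ennreal ((f x - a)\<^sup>2 * exp (V x) * \<gamma> (norm x))
          = ennreal (exp (- V x) / Z * ((f x - a)\<^sup>2 * exp (V x) * \<gamma> (norm x)))"
        using Z0 g by (intro ennreal_mult[symmetric]) auto
      also have "exp (- V x) / Z * ((f x - a)\<^sup>2 * exp (V x) * \<gamma> (norm x)) = (f x - a)\<^sup>2 * \<gamma> (norm x) / Z"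
        using Z0 by (simp add: exp_minus)
      also have "ennreal ((f x - a)\<^sup>2 * \<gamma> (norm x) / Z)
          \<le> ennreal (2 / Z * ((f x - c)\<^sup>2 * \<gamma> (norm x)) + 2 / Z * (c - a)\<^sup>2 * \<gamma> (norm x))"
      proof (rule ennreal_leI)
        have "(f x - a)\<^sup>2 \<le> 2 * (f x - c)\<^sup>2 + 2 * (c - a)\<^sup>2"
          using sq_le[of "f x - c" "c - a"] by simp
        then have "(f x - a)\<^sup>2 * (\<gamma> (norm x) / Z) \<le> (2 * (f x - c)\<^sup>2 + 2 * (c - a)\<^sup>2) * (\<gamma> (norm x) / Z)"
          using g Z0 by (intro mult_right_mono) auto
        also have "\<dots> = 2 / Z * ((f x - c)\<^sup>2 * \<gamma> (norm x)) + 2 / Z * (c - a)\<^sup>2 * \<gamma> (norm x)"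
          by (simp add: algebra_simps)
        finally show "(f x - a)\<^sup>2 * \<gamma> (norm x) / Z \<le> 2 / Z * ((f x - c)\<^sup>2 * \<gamma> (norm x)) + 2 / Z * (c - a)\<^sup>2 * \<gamma> (norm x)"
          by simp
      qed
      also have "\<dots> = ennreal (2 / Z) * ennreal ((f x - c)\<^sup>2 * \<gamma> (norm x)) + ennreal (2 / Z * (c - a)\<^sup>2) * ennreal (\<gamma> (norm x))"
      proof -
        have p1: "0 \<le> 2 / Z * ((f x - c)\<^sup>2 * \<gamma> (norm x))" using Z0 g by simp
        have p2: "0 \<le> 2 / Z * (c - a)\<^sup>2 * \<gamma> (norm x)" using Z0 g by simp
        have q1: "ennreal (2 / Z * ((f x - c)\<^sup>2 * \<gamma> (norm x))) = ennreal (2 / Z) * ennreal ((f x - c)\<^sup>2 * \<gamma> (norm x))"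
          using Z0 g by (intro ennreal_mult) auto
        have q2: "ennreal (2 / Z * (c - a)\<^sup>2 * \<gamma> (norm x)) = ennreal (2 / Z * (c - a)\<^sup>2) * ennreal (\<gamma> (norm x))"
          using Z0 g by (intro ennreal_mult) auto
        show ?thesis by (simp only: ennreal_plus[OF p1 p2] q1 q2)
      qed
      finally show "ennreal (exp (- V x) / Z) * ennreal ((f x - a)\<^sup>2 * exp (V x) * \<gamma> (norm x)) \<le> \<dots>" .
    qed
    also have "\<dots> = ennreal (2 / Z) * A + ennreal (2 / Z * (c - a)\<^sup>2) * ennreal Gr"
    proof -
      have i1: "(\<integral>\<^sup>+x. ennreal (2 / Z) * ennreal ((f x - c)\<^sup>2 * \<gamma> (norm x)) \<partial>lborel) = ennreal (2 / Z) * A"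
        unfolding A_def by (rule nn_integral_cmult) measurable
      have i2: "(\<integral>\<^sup>+x. ennreal (2 / Z * (c - a)\<^sup>2) * ennreal (\<gamma> (norm (x::'a))) \<partial>lborel) = ennreal (2 / Z * (c - a)\<^sup>2) * ennreal Gr"
        unfolding Gr(1)[symmetric] by (rule nn_integral_cmult) measurable
      show ?thesis
        by (subst nn_integral_add) (measurable, simp only: i1 i2)
    qed
    also have "\<dots> \<le> ennreal (2 / Z) * A + ennreal (2 / Z) * (A * ennreal (1 / Z^2) * ennreal Kr) * ennreal Gr"
    proof -
      have "ennreal (2 / Z * (c - a)\<^sup>2) = ennreal (2 / Z) * ennreal ((c - a)\<^sup>2)"
        using Z0 by (intro ennreal_mult) auto
      also have "\<dots> \<le> ennreal (2 / Z) * (A * ennreal (1 / Z^2) * ennreal Kr)"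
        by (rule mult_left_mono[OF ca]) simp
      finally show ?thesis by (intro add_left_mono mult_right_mono) auto
    qed
    also have "\<dots> = ennreal C0 * A"
    proof -
      have "ennreal C0 = ennreal (2 / Z) + ennreal (2 / Z) * ennreal (1 / Z^2) * ennreal Kr * ennreal Gr"
      proof -
        have n1: "0 \<le> 2 / Z" "0 \<le> 1 / Z^2" using Z0 by auto
        have "ennreal C0 = ennreal (2 / Z) + ennreal (2 / Z * (1 / Z^2) * Kr * Gr)"
          unfolding C0_def using n1 Kr Gr by (intro ennreal_plus) auto
        also have "ennreal (2 / Z * (1 / Z^2) * Kr * Gr) = ennreal (2 / Z * (1 / Z^2) * Kr) * ennreal Gr"
          using n1 Kr Gr by (intro ennreal_mult) auto
        also have "ennreal (2 / Z * (1 / Z^2) * Kr) = ennreal (2 / Z * (1 / Z^2)) * ennreal Kr"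
          using n1 Kr Gr by (intro ennreal_mult) auto
        also have "ennreal (2 / Z * (1 / Z^2)) = ennreal (2 / Z) * ennreal (1 / Z^2)"
          using n1 by (intro ennreal_mult) auto
        finally show ?thesis .
      qed
      then show ?thesis by (simp add: distrib_left distrib_right mult_ac)
    qed
    finally have "(\<integral>\<^sup>+x. ennreal ((f x - a)\<^sup>2 * exp (V x) * \<gamma> (norm x)) \<partial>muV V) \<le> ennreal C0 * A" .
    also have "\<dots> \<le> ennreal C0 * (ennreal (2 * Z / (v * m0)) * D)"
      by (rule mult_left_mono[OF A_le]) simp
    also have "\<dots> = ennreal C1 * D"
    proof -
      have h: "ennreal C1 = ennreal C0 * ennreal (2 * Z / (v * m0))"
        unfolding C1_def using C00 Z0 v0 m00 by (intro ennreal_mult) auto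
      show ?thesis by (simp only: h mult.assoc)
    qed
    finally show "(\<integral>\<^sup>+x. ennreal ((f x - muV_int V f)\<^sup>2 * exp (V x) * gammaf \<rho> (norm x)) \<partial>muV V)
             \<le> ennreal C1 * Dform \<rho> V f" unfolding a_def D_def \<gamma>_def .
  qed
qed


end
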